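(* The essential set of a polyomino $A$ is empty if and only if $A$ has a SE-source.
   Context: A $(0,1)$-matrix is convex if in every row and every column the 1's occur consecutively; it is connected if it has no zero row or column and any two 1's are joined by a path of 1's with consecutive ones horizontally or vertically adjacent. A polyomino is a connected convex $(0,1)$-matrix. A SE-source of a $(0,1)$-matrix is a 1 from which every other 1 can be reached by a path of 1's in which each step goes from a 1 to the horizontally adjacent 1 to its east or the vertically adjacent 1 to its south. The diagram of an $m\times n$ $(0,1)$-matrix $A$: for each 1 of $A$ at $(i,j)$ shade all positions $(i,j')$, $j'\ge j$, and $(i',j)$, $i'\ge i$; the diagram is the set of unshaded positions. The essential set is the set of positions $(i,j)$ of the diagram such that neither $(i+1,j)$ nor $(i,j+1)$ lies in the diagram. *)

theory Defs
  imports Main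
begin

text \<open>An m x n (0,1)-matrix is represented by its dimensions m, n and a predicate
  A :: nat => nat => bool, where A i j means entry (i,j) equals 1; indices are
  0-based, rows i < m and columns j < n. Entries outside this range are ignored.\<close>

definition pos :: "nat \<Rightarrow> nat \<Rightarrow> nat \<times> nat \<Rightarrow> bool" where
  "pos m n p \<longleftrightarrow> fst p < m \<and> snd p < n"

definition one :: "nat \<Rightarrow> nat \<Rightarrow> (nat \<Rightarrow> nat \<Rightarrow> bool) \<Rightarrow> nat \<times> nat \<Rightarrow> bool" where
  "one m n A p \<longleftrightarrow> pos m n p \<and> A (fst p) (snd p)"

definition convex01 :: "nat \<Rightarrow> nat \<Rightarrow> (nat \<Rightarrow> nat \<Rightarrow> bool) \<Rightarrow> bool" where
  "convex01 m n A \<longleftrightarrow>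
     (\<forall>i j1 j2 j. i < m \<and> j2 < n \<and> A i j1 \<and> A i j2 \<and> j1 \<le> j \<and> j \<le> j2 \<longrightarrow> A i j) \<and>
     (\<forall>j i1 i2 i. j < n \<and> i2 < m \<and> A i1 j \<and> A i2 j \<and> i1 \<le> i \<and> i \<le> i2 \<longrightarrow> A i j)"

definition adj_step :: "nat \<Rightarrow> nat \<Rightarrow> (nat \<Rightarrow> nat \<Rightarrow> bool) \<Rightarrow> nat \<times> nat \<Rightarrow> nat \<times> nat \<Rightarrow> bool" where
  "adj_step m n A p q \<longleftrightarrow> one m n A p \<and> one m n A q \<and>
     ((fst p = fst q \<and> (snd q = snd p + 1 \<or> snd p = snd q + 1)) \<or>
      (snd p = snd q \<and> (fst q = fst p + 1 \<or> fst p = fst q + 1)))"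

definition connected01 :: "nat \<Rightarrow> nat \<Rightarrow> (nat \<Rightarrow> nat \<Rightarrow> bool) \<Rightarrow> bool" where
  "connected01 m n A \<longleftrightarrow>
     (\<forall>i<m. \<exists>j<n. A i j) \<and> (\<forall>j<n. \<exists>i<m. A i j) \<and>
     (\<forall>p q. one m n A p \<and> one m n A q \<longrightarrow> (adj_step m n A)\<^sup>*\<^sup>* p q)"

definition polyomino :: "nat \<Rightarrow> nat \<Rightarrow> (nat \<Rightarrow> nat \<Rightarrow> bool) \<Rightarrow> bool" where
  "polyomino m n A \<longleftrightarrow> connected01 m n A \<and> convex01 m n A"

definition se_step :: "nat \<Rightarrow> nat \<Rightarrow> (nat \<Rightarrow> nat \<Rightarrow> bool) \<Rightarrow> nat \<times> nat \<Rightarrow> nat \<times> nat \<Rightarrow> bool" where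
  "se_step m n A p q \<longleftrightarrow> one m n A p \<and> one m n A q \<and>
     ((fst q = fst p \<and> snd q = snd p + 1) \<or> (snd q = snd p \<and> fst q = fst p + 1))"

definition SE_source :: "nat \<Rightarrow> nat \<Rightarrow> (nat \<Rightarrow> nat \<Rightarrow> bool) \<Rightarrow> nat \<times> nat \<Rightarrow> bool" where
  "SE_source m n A p \<longleftrightarrow> one m n A p \<and> (\<forall>q. one m n A q \<longrightarrow> (se_step m n A)\<^sup>*\<^sup>* p q)"

text \<open>A position is shaded iff there is a 1 weakly to its west in the same row
  or weakly to its north in the same column. The diagram is the set of unshaded positions.\<close>
definition diagram :: "nat \<Rightarrow> nat \<Rightarrow> (nat \<Rightarrow> nat \<Rightarrow> bool) \<Rightarrow> (nat \<times> nat) set" where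
  "diagram m n A = {(i, j). i < m \<and> j < n \<and>
      \<not> (\<exists>j'\<le>j. A i j') \<and> \<not> (\<exists>i'\<le>i. A i' j)}"

definition essential_set :: "nat \<Rightarrow> nat \<Rightarrow> (nat \<Rightarrow> nat \<Rightarrow> bool) \<Rightarrow> (nat \<times> nat) set" where
  "essential_set m n A = {(i, j). (i, j) \<in> diagram m n A \<and>
      (i + 1, j) \<notin> diagram m n A \<and> (i, j + 1) \<notin> diagram m n A}"

end

theory Submission
  imports Defs
begin

lemma diag_ess:
  assumes "(i, j) \<in> diagram m n A"
  shows "essential_set m n A \<noteq> {}"
  using assms
proof (induct "m + n - (i + j)" arbitrary: i j rule: less_induct)
  case less
  have im: "i < m" "j < n" using less.prems by (auto simp: diagram_def)
  show ?case
  proof (cases "(i + 1, j) \<in> diagram m n A")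
    case True
    then show ?thesis using less.hyps[of "i+1" j] im by auto
  next
    case F1: False
    show ?thesis
    proof (cases "(i, j + 1) \<in> diagram m n A")
      case True
      then show ?thesis using less.hyps[of i "j+1"] im by auto
    next
      case False
      then have "(i, j) \<in> essential_set m n A"
        using F1 less.prems by (auto simp: essential_set_def)
      then show ?thesis by auto
    qed
  qed
qed

lemma ess_iff_diag: "essential_set m n A = {} \<longleftrightarrow> diagram m n A = {}"
  using diag_ess[of _ _ m n A] by (auto simp: essential_set_def)

lemma se_mono:
  assumes "(se_step m n A)\<^sup>*\<^sup>* p q"
  shows "fst p \<le> fst q \<and> snd p \<le> snd q"
  using assms by (induct rule: rtranclp_induct) (auto simp: se_step_def)

lemma se_cross:
  assumes "(se_step m n A)\<^sup>*\<^sup>* p q" "one m n A p" "snd p \<le> j"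
  shows "j \<le> snd q \<Longrightarrow> \<exists>i'\<le>fst q. i' < m \<and> A i' j"
  using assms(1)
proof (induct rule: rtranclp_induct)
  case base
  then show ?case using assms(2,3) by (auto simp: one_def pos_def)
next
  case (step q r)
  show ?case
  proof (cases "j \<le> snd q")
    case True
    then obtain i' where "i' \<le> fst q" "i' < m" "A i' j" using step by blast
    moreover have "fst q \<le> fst r" using step(2) by (auto simp: se_step_def)
    ultimately show ?thesis by (meson le_trans)
  next
    case False
    then have "j = snd r" "one m n A r" using step(2) step.prems by (auto simp: se_step_def)
    then show ?thesis by (auto simp: one_def pos_def)
  qed
qed

lemma entry:
  assumes "r\<^sup>*\<^sup>* x y" "\<not> P x" "P y"
  shows "\<exists>u v. r u v \<and> \<not> P u \<and> P v"
  using assms by (induct rule: rtranclp_induct) auto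

lemma pred_exists:
  assumes conv: "convex01 m n A" and conn: "connected01 m n A"
    and D: "diagram m n A = {}" and ij: "i < m" "j < n" "A i j" "(i, j) \<noteq> (0, 0)"
  shows "(0 < i \<and> A (i - 1) j) \<or> (0 < j \<and> A i (j - 1))"
proof (rule ccontr)
  assume neg: "\<not> ?thesis"
  have rowc: "\<And>ri ca cb cc. ri < m \<Longrightarrow> cb < n \<Longrightarrow> A ri ca \<Longrightarrow> A ri cb \<Longrightarrow> ca \<le> cc \<Longrightarrow> cc \<le> cb \<Longrightarrow> A ri cc"
    using conv unfolding convex01_def by blast
  have colc: "\<And>ci ra rb rc. ci < n \<Longrightarrow> rb < m \<Longrightarrow> A ra ci \<Longrightarrow> A rb ci \<Longrightarrow> ra \<le> rc \<Longrightarrow> rc \<le> rb \<Longrightarrow> A rc ci"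
    using conv unfolding convex01_def by blast
  have nd: "\<And>x y. x < m \<Longrightarrow> y < n \<Longrightarrow> (\<exists>j'\<le>y. A x j') \<or> (\<exists>i'\<le>x. A i' y)"
    using D unfolding diagram_def by blast
  consider "i = 0" | "j = 0" | "0 < i" "0 < j" by blast
  then show False
  proof cases
    case 1
    with ij neg have j0: "0 < j" "\<not> A 0 (j - 1)" by auto
    from nd[of 0 "j-1"] ij 1 j0 have "(\<exists>j'\<le>j-1. A 0 j') \<or> A 0 (j-1)" by auto
    then show False using rowc[where ri=0 and cb=j and cc="j-1"] ij 1 j0 by auto
  next
    case 2
    with ij neg have i0: "0 < i" "\<not> A (i - 1) 0" by auto
    from nd[of "i-1" 0] ij 2 i0 have "(\<exists>i'\<le>i-1. A i' 0) \<or> A (i-1) 0" by auto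
    then show False using colc[where ci=0 and rb=i and rc="i-1"] ij 2 i0 by auto
  next
    case 3
    with neg have h1: "\<not> A (i - 1) j" and h2: "\<not> A i (j - 1)" by auto
    from nd[of "i-1" j] ij 3 have "(\<exists>j'\<le>j. A (i-1) j') \<or> (\<exists>i'\<le>i-1. A i' j)" by auto
    moreover have "\<not> (\<exists>i'\<le>i-1. A i' j)"
      using colc[where ci=j and rb=i and rc="i-1"] ij h1 by auto
    ultimately obtain b where b: "b \<le> j" "A (i-1) b" by auto
    from nd[of i "j-1"] ij 3 have "(\<exists>j'\<le>j-1. A i j') \<or> (\<exists>i'\<le>i. A i' (j-1))" by auto
    moreover have "\<not> (\<exists>j'\<le>j-1. A i j')"
      using rowc[where ri=i and cb=j and cc="j-1"] ij h2 by auto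
    ultimately obtain a where a: "a \<le> i" "A a (j-1)" by auto
    have "one m n A (i-1, b)" "one m n A (i, j)" using b ij by (auto simp: one_def pos_def)
    then have "(adj_step m n A)\<^sup>*\<^sup>* (i-1, b) (i, j)"
      using conn unfolding connected01_def by blast
    moreover have "\<not> (i \<le> fst (i-1, b) \<and> j \<le> snd (i-1, b))" using 3 by auto
    ultimately have "\<exists>u v. adj_step m n A u v \<and> \<not> (i \<le> fst u \<and> j \<le> snd u) \<and> (i \<le> fst v \<and> j \<le> snd v)"
      using entry[of "adj_step m n A" "(i-1, b)" "(i, j)" "\<lambda>p. i \<le> fst p \<and> j \<le> snd p"] by simp
    then obtain u v where uv: "adj_step m n A u v" "\<not> (i \<le> fst u \<and> j \<le> snd u)" "i \<le> fst v" "j \<le> snd v"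
      by blast
    obtain u1 u2 v1 v2 where [simp]: "u = (u1, u2)" "v = (v1, v2)" by fastforce
    from uv have ou: "u1 < m" "u2 < n" "A u1 u2" "v1 < m" "v2 < n" "A v1 v2"
      by (auto simp: adj_step_def one_def pos_def)
    from uv have "(u1 = v1 \<and> u2 = j - 1 \<and> v2 = j) \<or> (u2 = v2 \<and> u1 = i - 1 \<and> v1 = i)"
      by (auto simp: adj_step_def)
    then show False
    proof
      assume "u1 = v1 \<and> u2 = j - 1 \<and> v2 = j"
      then show False using colc[where ci="j-1" and ra=a and rb=u1 and rc=i] a ou uv h2 ij by auto
    next
      assume "u2 = v2 \<and> u1 = i - 1 \<and> v1 = i"
      then show False using rowc[where ri="i-1" and ca=b and cb=u2 and cc=j] b ou uv h1 ij by auto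
    qed
  qed
qed

lemma reach_aux:
  assumes conv: "convex01 m n A" and conn: "connected01 m n A"
    and D: "diagram m n A = {}"
  shows "\<forall>i j. i + j = k \<longrightarrow> i < m \<longrightarrow> j < n \<longrightarrow> A i j \<longrightarrow> (se_step m n A)\<^sup>*\<^sup>* (0, 0) (i, j)"
proof (induct k rule: less_induct)
  case (less k)
  show ?case
  proof (intro allI impI)
    fix i j assume k: "i + j = k" and ij: "i < m" "j < n" "A i j"
    show "(se_step m n A)\<^sup>*\<^sup>* (0, 0) (i, j)"
    proof (cases "(i, j) = (0, 0)")
      case True
      then show ?thesis by simp
    next
      case False
      from pred_exists[OF conv conn D ij False]
      show ?thesis
      proof
        assume h: "0 < i \<and> A (i - 1) j"
        have "i - 1 + j < k" using h k by simp
        then have "(se_step m n A)\<^sup>*\<^sup>* (0, 0) (i - 1, j)"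
          using less[of "i - 1 + j"] h ij by simp
        moreover have "se_step m n A (i - 1, j) (i, j)"
          using h ij by (auto simp: se_step_def one_def pos_def)
        ultimately show ?thesis by (rule rtranclp.rtrancl_into_rtrancl)
      next
        assume h: "0 < j \<and> A i (j - 1)"
        have "i + (j - 1) < k" using h k by simp
        then have "(se_step m n A)\<^sup>*\<^sup>* (0, 0) (i, j - 1)"
          using less[of "i + (j - 1)"] h ij by simp
        moreover have "se_step m n A (i, j - 1) (i, j)"
          using h ij by (auto simp: se_step_def one_def pos_def)
        ultimately show ?thesis by (rule rtranclp.rtrancl_into_rtrancl)
      qed
    qed
  qed
qed

lemma reach:
  assumes "convex01 m n A" "connected01 m n A" "diagram m n A = {}"
  shows "i < m \<Longrightarrow> j < n \<Longrightarrow> A i j \<Longrightarrow> (se_step m n A)\<^sup>*\<^sup>* (0, 0) (i, j)"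
  using reach_aux[OF assms, of "i + j"] by blast

theorem mainTheorem3:
  fixes m n :: nat and A :: "nat \<Rightarrow> nat \<Rightarrow> bool"
  assumes "0 < m" and "0 < n"
    and "polyomino m n A"
  shows "essential_set m n A = {} \<longleftrightarrow> (\<exists>p. SE_source m n A p)"
proof -
  have conv: "convex01 m n A" and conn: "connected01 m n A"
    using assms(3) by (auto simp: polyomino_def)
  have "diagram m n A = {} \<longleftrightarrow> (\<exists>p. SE_source m n A p)"
  proof
    assume D: "diagram m n A = {}"
    have "A 0 0" using D assms(1,2) unfolding diagram_def by auto
    then have "SE_source m n A (0, 0)"
      using reach[OF conv conn D] assms(1,2)
      by (simp add: SE_source_def one_def pos_def)
    then show "\<exists>p. SE_source m n A p" by blast
  next
    assume "\<exists>p. SE_source m n A p"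
    then obtain p where p: "one m n A p" "\<And>q. one m n A q \<Longrightarrow> (se_step m n A)\<^sup>*\<^sup>* p q"
      by (auto simp: SE_source_def)
    obtain r where r: "r < m" "A r 0" using conn assms(2) unfolding connected01_def by blast
    have "one m n A (r, 0)" using r assms(2) by (simp add: one_def pos_def)
    then have "(se_step m n A)\<^sup>*\<^sup>* p (r, 0)" by (rule p(2))
    then have p2: "snd p = 0" using se_mono[of m n A p "(r, 0)"] by simp
    show "diagram m n A = {}"
    proof (rule ccontr)
      assume "diagram m n A \<noteq> {}"
      then obtain i j where ij: "i < m" "j < n" "\<not> (\<exists>j'\<le>j. A i j')" "\<not> (\<exists>i'\<le>i. A i' j)"
        unfolding diagram_def by blast
      obtain k where k: "k < n" "A i k" using conn ij unfolding connected01_def by blast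
      have "j \<le> k" using ij k by (meson nat_le_linear)
      have "one m n A (i, k)" using k ij by (simp add: one_def pos_def)
      then have "(se_step m n A)\<^sup>*\<^sup>* p (i, k)" by (rule p(2))
      from se_cross[OF this p(1), of j] p2 \<open>j \<le> k\<close> obtain i' where "i' \<le> i" "A i' j" by auto
      then show False using ij by blast
    qed
  qed
  then show ?thesis using ess_iff_diag by blast
qed

end
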